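(* Let $t\ge2$ and let $>$ be the graded reverse lexicographic order on $\mathbb{K}[E_t]$ with $a_1>\cdots>a_t>f_1>f_2>f_3>e_1>e_2>e_3>b_1>\cdots>b_t$. Order the minimal monomial generators of $\operatorname{in}(I_{G_t})$ as follows: first the elements of $\mathcal{M}_1=\{a_ib_j:1\le j<i\le t\}$, then those of $\mathcal{M}_2=\{a_ia_jf_1f_3e_2:1\le i<j\le t\}$, then those of $\mathcal{M}_3=\{a_i^2f_1f_3e_2:1\le i\le t\}$, each set listed from smallest to largest with respect to $>$; explicitly $a_tb_{t-1}, a_tb_{t-2},\dots,a_{t-1}b_{t-2},\dots,a_2b_1,\ a_ta_{t-1}f_1f_3e_2, a_ta_{t-2}f_1f_3e_2,\dots,a_2a_1f_1f_3e_2,\ a_t^2f_1f_3e_2, a_{t-1}^2f_1f_3e_2,\dots,a_1^2f_1f_3e_2$. Then $\operatorname{in}(I_{G_t})$ has linear quotients with respect to this ordering $g_1,\dots,g_{t^2}$. Furthermore, if $n_p$ denotes the number of (variable) generators of $\langle g_1,\dots,g_{p-1}\rangle:\langle g_p\rangle$, then $\max\{n_p : 2\le p\le t^2\}=2t-2$.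
   Context: $\mathbb{K}$ is an algebraically closed field of characteristic zero. For $t\ge2$, $G_t$ is the graph with vertex set $\{x_1,x_2,y_1,\dots,y_t,z_1,z_2,w_1,w_2\}$ and edges $a_i=\{x_1,y_i\}$, $b_i=\{x_2,y_i\}$ ($1\le i\le t$), $e_1=\{x_1,z_1\}$, $e_2=\{z_1,z_2\}$, $e_3=\{z_2,x_1\}$, $f_1=\{x_2,w_1\}$, $f_2=\{w_1,w_2\}$, $f_3=\{w_2,x_2\}$. Its toric ideal $I_{G_t}$ is the kernel of the $\mathbb{K}$-algebra map from $\mathbb{K}[E_t]=\mathbb{K}[a_1,\dots,a_t,f_1,f_2,f_3,e_1,e_2,e_3,b_1,\dots,b_t]$ to the polynomial ring on the vertices sending each edge variable to the product of its two endpoints; $\operatorname{in}(I_{G_t})$ is its initial ideal with respect to $>$. A monomial ideal has linear quotients with respect to an ordering $g_1,\dots,g_m$ of its minimal generators if $\langle g_1,\dots,g_{j-1}\rangle:\langle g_j\rangle$ is generated by variables for every $j=2,\dots,m$. *)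

theory Defs
  imports "HOL-Library.Poly_Mapping" "HOL-Computational_Algebra.Polynomial"
begin

datatype vertex = X nat | Y nat | Z nat | W nat

datatype edge = A nat | B nat | Ee nat | Fe nat

fun ends :: "edge \<Rightarrow> vertex set" where
  "ends (A i) = {X 1, Y i}"
| "ends (B i) = {X 2, Y i}"
| "ends (Ee k) = (if k = 1 then {X 1, Z 1} else if k = 2 then {Z 1, Z 2}
                  else if k = 3 then {Z 2, X 1} else {})"
| "ends (Fe k) = (if k = 1 then {X 2, W 1} else if k = 2 then {W 1, W 2}
                  else if k = 3 then {W 2, X 2} else {})"

definition Et :: "nat \<Rightarrow> edge set" where
  "Et t = {A i | i. 1 \<le> i \<and> i \<le> t} \<union> {B i | i. 1 \<le> i \<and> i \<le> t}
        \<union> {Ee k | k. 1 \<le> k \<and> k \<le> 3} \<union> {Fe k | k. 1 \<le> k \<and> k \<le> 3}"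

definition is_mono :: "nat \<Rightarrow> (edge \<Rightarrow>\<^sub>0 nat) \<Rightarrow> bool" where
  "is_mono t m \<longleftrightarrow> Poly_Mapping.keys m \<subseteq> Et t"

definition is_poly :: "nat \<Rightarrow> ((edge \<Rightarrow>\<^sub>0 nat) \<Rightarrow>\<^sub>0 'k::zero) \<Rightarrow> bool" where
  "is_poly t p \<longleftrightarrow> (\<forall>m \<in> Poly_Mapping.keys p. is_mono t m)"

text \<open>Image of the monomial m under the toric map (each edge variable goes to the product
  of its endpoints): exponent vector on the vertices.\<close>
definition img :: "(edge \<Rightarrow>\<^sub>0 nat) \<Rightarrow> vertex \<Rightarrow> nat" where
  "img m v = (\<Sum>e \<in> Poly_Mapping.keys m. if v \<in> ends e then Poly_Mapping.lookup m e else 0)"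

text \<open>Toric ideal I_{G_t}: kernel of the K-algebra map K[E_t] -> K[V]
  (the coefficient of the vertex monomial u in the image of p is the sum below).\<close>
definition toric_ideal :: "nat \<Rightarrow> ((edge \<Rightarrow>\<^sub>0 nat) \<Rightarrow>\<^sub>0 'k::field) set" where
  "toric_ideal t = {p. is_poly t p \<and>
      (\<forall>u. (\<Sum>m \<in> {m \<in> Poly_Mapping.keys p. img m = u}. Poly_Mapping.lookup p m) = 0)}"

text \<open>Position of a variable in a_1 > ... > a_t > f_1 > f_2 > f_3 > e_1 > e_2 > e_3 > b_1 > ... > b_t
  (smaller index = larger variable).\<close>
fun idx :: "nat \<Rightarrow> edge \<Rightarrow> nat" where
  "idx t (A i) = i"
| "idx t (Fe k) = t + k"
| "idx t (Ee k) = t + 3 + k"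
| "idx t (B i) = t + 6 + i"

definition mdeg :: "(edge \<Rightarrow>\<^sub>0 nat) \<Rightarrow> nat" where
  "mdeg m = (\<Sum>e \<in> Poly_Mapping.keys m. Poly_Mapping.lookup m e)"

definition grevlex_less :: "nat \<Rightarrow> (edge \<Rightarrow>\<^sub>0 nat) \<Rightarrow> (edge \<Rightarrow>\<^sub>0 nat) \<Rightarrow> bool" where
  "grevlex_less t m m' \<longleftrightarrow> mdeg m < mdeg m' \<or>
     (mdeg m = mdeg m' \<and> (\<exists>v \<in> Et t. Poly_Mapping.lookup m v > Poly_Mapping.lookup m' v \<and>
        (\<forall>w \<in> Et t. idx t w > idx t v \<longrightarrow> Poly_Mapping.lookup m w = Poly_Mapping.lookup m' w)))"

definition is_lead :: "nat \<Rightarrow> ((edge \<Rightarrow>\<^sub>0 nat) \<Rightarrow>\<^sub>0 'k::zero) \<Rightarrow> (edge \<Rightarrow>\<^sub>0 nat) \<Rightarrow> bool" where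
  "is_lead t p m \<longleftrightarrow> m \<in> Poly_Mapping.keys p \<and> (\<forall>m' \<in> Poly_Mapping.keys p. m' \<noteq> m \<longrightarrow> grevlex_less t m' m)"

text \<open>The monomials lying in the initial ideal in(I_{G_t}) (a monomial ideal, represented by
  the set of its monomials = leading monomials of nonzero elements of I_{G_t}).\<close>
definition initial_monos :: "'k::field itself \<Rightarrow> nat \<Rightarrow> (edge \<Rightarrow>\<^sub>0 nat) set" where
  "initial_monos _ t = {m. \<exists>p \<in> (toric_ideal t :: ((edge \<Rightarrow>\<^sub>0 nat) \<Rightarrow>\<^sub>0 'k) set).
      p \<noteq> 0 \<and> is_lead t p m}"

definition mdvd :: "(edge \<Rightarrow>\<^sub>0 nat) \<Rightarrow> (edge \<Rightarrow>\<^sub>0 nat) \<Rightarrow> bool" where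
  "mdvd m m' \<longleftrightarrow> (\<forall>v. Poly_Mapping.lookup m v \<le> Poly_Mapping.lookup m' v)"

definition min_gens :: "(edge \<Rightarrow>\<^sub>0 nat) set \<Rightarrow> (edge \<Rightarrow>\<^sub>0 nat) set" where
  "min_gens S = {m \<in> S. \<forall>m' \<in> S. mdvd m' m \<longrightarrow> m' = m}"

text \<open>Monomials of the colon ideal <g_1,...,g_{j-1}> : <g_j> (0-based: gs!0..gs!(j-1) : gs!j).\<close>
definition colon_monos :: "nat \<Rightarrow> (edge \<Rightarrow>\<^sub>0 nat) list \<Rightarrow> nat \<Rightarrow> (edge \<Rightarrow>\<^sub>0 nat) set" where
  "colon_monos t gs j = {u. is_mono t u \<and> (\<exists>i < j. mdvd (gs ! i) (u + gs ! j))}"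

definition var :: "edge \<Rightarrow> (edge \<Rightarrow>\<^sub>0 nat)" where
  "var v = Poly_Mapping.single v 1"

definition generated_by_vars :: "nat \<Rightarrow> (edge \<Rightarrow>\<^sub>0 nat) set \<Rightarrow> bool" where
  "generated_by_vars t S \<longleftrightarrow> (\<forall>u \<in> S. \<exists>v \<in> Et t. var v \<in> S \<and> mdvd (var v) u)"

definition linear_quotients :: "nat \<Rightarrow> (edge \<Rightarrow>\<^sub>0 nat) list \<Rightarrow> bool" where
  "linear_quotients t gs \<longleftrightarrow> (\<forall>j. 1 \<le> j \<and> j < length gs \<longrightarrow> generated_by_vars t (colon_monos t gs j))"

text \<open>n_p for 1-based p: number of variable generators of <g_1..g_{p-1}> : <g_p>.\<close>
definition n_gens :: "nat \<Rightarrow> (edge \<Rightarrow>\<^sub>0 nat) list \<Rightarrow> nat \<Rightarrow> nat" where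
  "n_gens t gs p = card {v \<in> Et t. var v \<in> colon_monos t gs (p - 1)}"

definition f1f3e2 :: "edge \<Rightarrow>\<^sub>0 nat" where
  "f1f3e2 = var (Fe 1) + var (Fe 3) + var (Ee 2)"

definition gens :: "nat \<Rightarrow> (edge \<Rightarrow>\<^sub>0 nat) list" where
  "gens t =
     concat (map (\<lambda>i. map (\<lambda>j. var (A i) + var (B j)) (rev [1..<i])) (rev [2..<t+1]))
   @ concat (map (\<lambda>j. map (\<lambda>i. var (A j) + var (A i) + f1f3e2) (rev [1..<j])) (rev [2..<t+1]))
   @ map (\<lambda>i. var (A i) + var (A i) + f1f3e2) (rev [1..<t+1])"

end

theory Submission
  imports Defs
begin

lemma lookup_var: "Poly_Mapping.lookup (var a) w = (if a = w then 1 else 0)"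
  by (simp add: var_def Poly_Mapping.lookup_single when_def)

lemma keys_var[simp]: "Poly_Mapping.keys (var a) = {a}"
  by (simp add: var_def Poly_Mapping.keys_single)

definition mk :: "nat \<times> nat \<times> nat \<Rightarrow> (edge \<Rightarrow>\<^sub>0 nat)" where
  "mk d = (case d of (c,x,y) \<Rightarrow> if c = 0 then var (A x) + var (B y)
      else if c = 1 then var (A x) + var (A y) + f1f3e2 else var (A x) + var (A x) + f1f3e2)"

definition D :: "nat \<Rightarrow> (nat \<times> nat \<times> nat) list" where
  "D t = concat (map (\<lambda>i. map (\<lambda>j. (0,i,j)) (rev [1..<i])) (rev [2..<t+1]))
   @ concat (map (\<lambda>j. map (\<lambda>i. (1,j,i)) (rev [1..<j])) (rev [2..<t+1]))
   @ map (\<lambda>i. (2,i,0)) (rev [1..<t+1])"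

lemma gens_D: "gens t = map mk (D t)"
  by (simp add: gens_def D_def map_concat o_def mk_def)

lemma set_D1: "set (concat (map (\<lambda>i. map (\<lambda>j. (0::nat,i,j)) (rev [1..<i])) (rev [2..<t+1])))
   = {(0,i,j) | i j. 1 \<le> j \<and> j < i \<and> i \<le> t}"
  by (auto simp: image_iff)
lemma set_D2: "set (concat (map (\<lambda>j. map (\<lambda>i. (1::nat,j,i)) (rev [1..<j])) (rev [2..<t+1])))
   = {(1,j,i) | i j. 1 \<le> i \<and> i < j \<and> j \<le> t}"
  by (auto simp: image_iff)

lemma set_D: "set (D t) = {(0,i,j) | i j. 1 \<le> j \<and> j < i \<and> i \<le> t}
   \<union> {(1,j,i) | i j. 1 \<le> i \<and> i < j \<and> j \<le> t} \<union> {(2,i,0) | i. 1 \<le> i \<and> i \<le> t}"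
  unfolding D_def set_append set_D1 set_D2 by auto


definition prec :: "nat \<times> nat \<times> nat \<Rightarrow> nat \<times> nat \<times> nat \<Rightarrow> bool" where
  "prec d d' \<longleftrightarrow> fst d < fst d' \<or> (fst d = fst d' \<and> (fst (snd d') < fst (snd d) \<or>
      (fst (snd d') = fst (snd d) \<and> snd (snd d') < snd (snd d))))"

lemma sorted_wrt_concat_I: "(\<forall>xs\<in>set xss. sorted_wrt P xs) \<Longrightarrow>
   sorted_wrt (\<lambda>xs ys. \<forall>x\<in>set xs. \<forall>y\<in>set ys. P x y) xss \<Longrightarrow> sorted_wrt P (concat xss)"
  by (induction xss) (auto simp: sorted_wrt_append)

lemma sorted_D: "sorted_wrt prec (D t)"
proof -
  have b1: "sorted_wrt prec (concat (map (\<lambda>i. map (\<lambda>j. (0::nat,i,j)) (rev [1..<i])) (rev [2..<t+1])))"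
    apply (rule sorted_wrt_concat_I)
     apply (auto simp del: upt_Suc simp: sorted_wrt_map sorted_wrt_rev prec_def intro!: sorted_wrt_mono_rel[OF _ sorted_wrt_upt])[1]
    apply (simp only: sorted_wrt_map sorted_wrt_rev)
    apply (rule sorted_wrt_mono_rel[OF _ sorted_wrt_upt])
    apply (auto simp: prec_def)
    done
  have b2: "sorted_wrt prec (concat (map (\<lambda>j. map (\<lambda>i. (1::nat,j,i)) (rev [1..<j])) (rev [2..<t+1])))"
    apply (rule sorted_wrt_concat_I)
     apply (auto simp del: upt_Suc simp: sorted_wrt_map sorted_wrt_rev prec_def intro!: sorted_wrt_mono_rel[OF _ sorted_wrt_upt])[1]
    apply (simp only: sorted_wrt_map sorted_wrt_rev)
    apply (rule sorted_wrt_mono_rel[OF _ sorted_wrt_upt])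
    apply (auto simp: prec_def)
    done
  have b3: "sorted_wrt prec (map (\<lambda>i. (2::nat,i,0::nat)) (rev [1..<t+1]))"
    apply (simp only: sorted_wrt_map sorted_wrt_rev)
    apply (rule sorted_wrt_mono_rel[OF _ sorted_wrt_upt])
    apply (auto simp: prec_def)
    done
  show ?thesis
    unfolding D_def sorted_wrt_append set_append set_D1 set_D2
    using b1 b2 b3 by (auto simp: prec_def)
qed

lemma prec_irrefl: "\<not> prec d d" by (auto simp: prec_def)
lemma prec_asym: "prec d d' \<Longrightarrow> \<not> prec d' d" by (auto simp: prec_def)

lemma take_prec:
  assumes "sorted_wrt P xs" "\<And>x. \<not> P x x" "\<And>x y. P x y \<Longrightarrow> \<not> P y x" "q < length xs"
  shows "(\<exists>i<q. Q (xs!i)) \<longleftrightarrow> (\<exists>x\<in>set xs. P x (xs!q) \<and> Q x)"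
proof
  assume "\<exists>i<q. Q (xs!i)"
  then obtain i where "i < q" "Q (xs!i)" by blast
  then show "\<exists>x\<in>set xs. P x (xs!q) \<and> Q x"
    using sorted_wrt_nth_less[OF assms(1) \<open>i<q\<close> assms(4)] assms(4) by auto
next
  assume "\<exists>x\<in>set xs. P x (xs!q) \<and> Q x"
  then obtain x where x: "x \<in> set xs" "P x (xs!q)" "Q x" by blast
  then obtain i where i: "i < length xs" "xs!i = x" by (auto simp: in_set_conv_nth)
  have "i < q"
  proof (rule ccontr)
    assume "\<not> i < q"
    then consider "i = q" | "q < i" by linarith
    then show False
    proof cases
      case 1 then show False using x i assms(2) by auto
    next
      case 2 then show False using sorted_wrt_nth_less[OF assms(1) 2 i(1)] x i assms(3) by auto
    qed
  qed
  then show "\<exists>i<q. Q (xs!i)" using i x by auto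
qed

lemma colon_D: assumes "q < length (D t)"
  shows "colon_monos t (gens t) q = {u. is_mono t u \<and> (\<exists>d\<in>set (D t). prec d (D t ! q) \<and> mdvd (mk d) (u + mk (D t ! q)))}"
proof -
  have "(\<exists>i<q. mdvd (mk (D t ! i)) (u + mk (D t ! q))) \<longleftrightarrow> (\<exists>d\<in>set (D t). prec d (D t ! q) \<and> mdvd (mk d) (u + mk (D t ! q)))" for u
    using take_prec[OF sorted_D prec_irrefl prec_asym assms, of "\<lambda>d. mdvd (mk d) (u + mk (D t ! q))"] by simp
  moreover have H: "\<forall>i\<le>q. gens t ! i = mk (D t ! i)" using assms by (simp add: gens_D)
  ultimately have eq: "(\<exists>i<q. mdvd (gens t ! i) (u + gens t ! q)) \<longleftrightarrow> (\<exists>d\<in>set (D t). prec d (D t ! q) \<and> mdvd (mk d) (u + mk (D t ! q)))" for u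
    by (metis less_imp_le order_refl)
  show ?thesis unfolding colon_monos_def by (simp only: eq)
qed


definition ind :: "edge \<Rightarrow> edge \<Rightarrow> nat" where "ind a w = (if a = w then 1 else 0)"

lemma lk_add: "Poly_Mapping.lookup (m + n) w = Poly_Mapping.lookup m w + Poly_Mapping.lookup n w"
  by (simp add: Poly_Mapping.lookup_add)

lemma lk_var: "Poly_Mapping.lookup (var a) w = ind a w"
  by (simp add: lookup_var ind_def)

lemma lk_mk: "Poly_Mapping.lookup (mk (c,x,y)) w = (if c = 0 then ind (A x) w + ind (B y) w
   else if c = 1 then ind (A x) w + ind (A y) w + ind (Fe 1) w + ind (Fe 3) w + ind (Ee 2) w
   else 2 * ind (A x) w + ind (Fe 1) w + ind (Fe 3) w + ind (Ee 2) w)"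
  by (simp add: mk_def lk_add lk_var f1f3e2_def)

lemma mdvd_mk0: "mdvd (mk (0,i,j)) m \<longleftrightarrow> 1 \<le> Poly_Mapping.lookup m (A i) \<and> 1 \<le> Poly_Mapping.lookup m (B j)"
  unfolding mdvd_def lk_mk
  apply (rule iffI)
   apply (frule spec[where x="A i"], drule spec[where x="B j"], simp add: ind_def)
  apply (auto simp: ind_def)
  done

lemma mdvd_mk1: "i \<noteq> j \<Longrightarrow> mdvd (mk (1,j,i)) m \<longleftrightarrow> 1 \<le> Poly_Mapping.lookup m (A j) \<and> 1 \<le> Poly_Mapping.lookup m (A i)
   \<and> 1 \<le> Poly_Mapping.lookup m (Fe 1) \<and> 1 \<le> Poly_Mapping.lookup m (Fe 3) \<and> 1 \<le> Poly_Mapping.lookup m (Ee 2)"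
  unfolding mdvd_def lk_mk
  apply (rule iffI)
   apply (frule spec[where x="A i"], frule spec[where x="A j"], frule spec[where x="Fe 1"],
      frule spec[where x="Fe 3"], drule spec[where x="Ee 2"], simp add: ind_def)
  apply (auto simp: ind_def)
  done

lemma mdvd_mk2: "mdvd (mk (2,i,y)) m \<longleftrightarrow> 2 \<le> Poly_Mapping.lookup m (A i)
   \<and> 1 \<le> Poly_Mapping.lookup m (Fe 1) \<and> 1 \<le> Poly_Mapping.lookup m (Fe 3) \<and> 1 \<le> Poly_Mapping.lookup m (Ee 2)"
  unfolding mdvd_def lk_mk
  apply (rule iffI)
   apply (frule spec[where x="A i"], frule spec[where x="Fe 1"],
      frule spec[where x="Fe 3"], drule spec[where x="Ee 2"], simp add: ind_def)
  apply (auto simp: ind_def)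
  done


lemma D_cases:
  assumes "d \<in> set (D t)"
  obtains (M1) i j where "d = (0,i,j)" "1 \<le> j" "j < i" "i \<le> t"
    | (M2) i j where "d = (1,j,i)" "1 \<le> i" "i < j" "j \<le> t"
    | (M3) i where "d = (2,i,0)" "1 \<le> i" "i \<le> t"
  using assms unfolding set_D by blast

lemma in_D0: "1 \<le> j \<Longrightarrow> j < i \<Longrightarrow> i \<le> t \<Longrightarrow> (0,i,j) \<in> set (D t)" unfolding set_D by blast
lemma in_D1: "1 \<le> i \<Longrightarrow> i < j \<Longrightarrow> j \<le> t \<Longrightarrow> (1,j,i) \<in> set (D t)" unfolding set_D by blast
lemma in_D2: "1 \<le> i \<Longrightarrow> i \<le> t \<Longrightarrow> (2,i,0) \<in> set (D t)" unfolding set_D by blast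

lemma A_Et[simp]: "A k \<in> Et t \<longleftrightarrow> 1 \<le> k \<and> k \<le> t" by (auto simp: Et_def)
lemma B_Et[simp]: "B k \<in> Et t \<longleftrightarrow> 1 \<le> k \<and> k \<le> t" by (auto simp: Et_def)
lemma Ee_Et[simp]: "Ee k \<in> Et t \<longleftrightarrow> 1 \<le> k \<and> k \<le> 3" by (auto simp: Et_def)
lemma Fe_Et[simp]: "Fe k \<in> Et t \<longleftrightarrow> 1 \<le> k \<and> k \<le> 3" by (auto simp: Et_def)

definition LQ where "LQ t d0 d \<longleftrightarrow> (\<exists>v\<in>Et t. Poly_Mapping.lookup (mk d0) v < Poly_Mapping.lookup (mk d) v \<and>
   (\<exists>d'\<in>set (D t). prec d' d0 \<and> mdvd (mk d') (var v + mk d0)))"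

lemma LQ_I: "v \<in> Et t \<Longrightarrow> Poly_Mapping.lookup (mk d0) v < Poly_Mapping.lookup (mk d) v \<Longrightarrow> d' \<in> set (D t) \<Longrightarrow>
   prec d' d0 \<Longrightarrow> mdvd (mk d') (var v + mk d0) \<Longrightarrow> LQ t d0 d"
  unfolding LQ_def by blast

lemma LQ_M3:
  assumes "1 \<le> i" "i \<le> t" "1 \<le> k" "k \<le> t" "k \<noteq> i" "1 \<le> Poly_Mapping.lookup (mk d) (A k)"
  shows "LQ t (2,i,0) d"
proof (rule LQ_I[where v="A k" and d'="(1, max k i, min k i)"])
  show "(1, max k i, min k i) \<in> set (D t)" using assms by (intro in_D1) auto
  show "prec (1, max k i, min k i) (2, i, 0)" by (simp add: prec_def)
  show "mdvd (mk (1, max k i, min k i)) (var (A k) + mk (2, i, 0))"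
    using assms by (subst mdvd_mk1) (auto simp: lk_add lk_var lk_mk ind_def max_def min_def)
qed (use assms in \<open>auto simp: lk_mk ind_def\<close>)

lemma LQ_all:
  assumes d0: "d0 \<in> set (D t)" and d: "d \<in> set (D t)" and p: "prec d d0"
  shows "LQ t d0 d"
  using d0
proof (cases rule: D_cases)
  case (M1 i j)
  note O = M1
  from d show ?thesis
  proof (cases rule: D_cases)
    case (M1 i' j')
    show ?thesis
    proof (cases "i < i'")
      case True
      show ?thesis
        apply (rule LQ_I[where v="A i'" and d'="(0,i',j)"])
        using O M1 True
        by (auto simp: lk_mk ind_def prec_def mdvd_mk0 lk_add lk_var intro: in_D0)
    next
      case False
      then have "i' = i" "j < j'" using p O M1 by (auto simp: prec_def)
      then show ?thesis
        apply -
        apply (rule LQ_I[where v="B j'" and d'="d"])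
        using O M1 d p
        by (auto simp: lk_mk ind_def mdvd_mk0 lk_add lk_var)
    qed
  next
    case (M2 i' j')
    then show ?thesis using p O by (auto simp: prec_def)
  next
    case (M3 i')
    then show ?thesis using p O by (auto simp: prec_def)
  qed
next
  case (M2 i j)
  note O = M2
  from d show ?thesis
  proof (cases rule: D_cases)
    case (M1 k l)
    show ?thesis
    proof (cases "l < j")
      case True
      show ?thesis
        apply (rule LQ_I[where v="B l" and d'="(0,j,l)"])
        using O M1 True
        by (auto simp: lk_mk ind_def prec_def mdvd_mk0 lk_add lk_var intro: in_D0)
    next
      case False
      show ?thesis
        apply (rule LQ_I[where v="A k" and d'="(1,k,j)"])
        using O M1 False
        by (auto simp: lk_mk ind_def prec_def mdvd_mk1 mdvd_mk1[unfolded One_nat_def] lk_add lk_var intro: in_D1 in_D1[unfolded One_nat_def])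
    qed
  next
    case (M2 i' j')
    show ?thesis
    proof (cases "j < j'")
      case True
      show ?thesis
        apply (rule LQ_I[where v="A j'" and d'="(1,j',j)"])
        using O M2 True
        by (auto simp: lk_mk ind_def prec_def mdvd_mk1 mdvd_mk1[unfolded One_nat_def] lk_add lk_var intro: in_D1 in_D1[unfolded One_nat_def])
    next
      case False
      then have "j' = j" "i < i'" using p O M2 by (auto simp: prec_def)
      then show ?thesis
        apply -
        apply (rule LQ_I[where v="A i'" and d'="d"])
        using O M2 d p
        by (auto simp: lk_mk ind_def mdvd_mk1 mdvd_mk1[unfolded One_nat_def] lk_add lk_var)
    qed
  next
    case (M3 i')
    then show ?thesis using p O by (auto simp: prec_def)
  qed
next
  case (M3 i)
  note O = M3
  from d show ?thesis
  proof (cases rule: D_cases)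
    case (M1 k l)
    show ?thesis
    proof (cases "k = i")
      case True
      show ?thesis
        apply (rule LQ_I[where v="B l" and d'="d"])
        using O M1 True d p
        by (auto simp: lk_mk ind_def mdvd_mk0 lk_add lk_var)
    next
      case False
      then show ?thesis unfolding O(1) using O M1
        by (intro LQ_M3[where k=k]) (auto simp: lk_mk ind_def)
    qed
  next
    case (M2 k l)
    show ?thesis
    proof (cases "l = i")
      case True
      then show ?thesis unfolding O(1) using O M2
        by (intro LQ_M3[where k=k]) (auto simp: lk_mk ind_def)
    next
      case False
      then show ?thesis unfolding O(1) using O M2
        by (intro LQ_M3[where k=l]) (auto simp: lk_mk ind_def)
    qed
  next
    case (M3 k)
    then have "i < k" using p O by (auto simp: prec_def)
    then show ?thesis unfolding O(1) using M3 O
      by (intro LQ_M3[where k=k]) (auto simp: lk_mk ind_def)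
  qed
qed

lemma len_gens: "length (gens t) = length (D t)" by (simp add: gens_D)

lemma is_mono_var: "v \<in> Et t \<Longrightarrow> is_mono t (var v)" by (simp add: is_mono_def)

lemma linq: "linear_quotients t (gens t)"
  unfolding linear_quotients_def
proof (intro allI impI)
  fix q assume "1 \<le> q \<and> q < length (gens t)"
  then have q: "q < length (D t)" by (simp add: len_gens)
  have d0: "D t ! q \<in> set (D t)" using q by simp
  show "generated_by_vars t (colon_monos t (gens t) q)"
    unfolding generated_by_vars_def colon_D[OF q]
  proof
    fix u assume "u \<in> {u. is_mono t u \<and> (\<exists>d\<in>set (D t). prec d (D t ! q) \<and> mdvd (mk d) (u + mk (D t ! q)))}"
    then obtain d where u: "is_mono t u" "d \<in> set (D t)" "prec d (D t ! q)" "mdvd (mk d) (u + mk (D t ! q))" by blast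
    from LQ_all[OF d0 u(2,3)] obtain v d' where v: "v \<in> Et t"
      "Poly_Mapping.lookup (mk (D t ! q)) v < Poly_Mapping.lookup (mk d) v"
      "d' \<in> set (D t)" "prec d' (D t ! q)" "mdvd (mk d') (var v + mk (D t ! q))"
      unfolding LQ_def by blast
    have "Poly_Mapping.lookup (mk d) v \<le> Poly_Mapping.lookup u v + Poly_Mapping.lookup (mk (D t ! q)) v"
      using u(4) unfolding mdvd_def lk_add by blast
    then have "mdvd (var v) u" using v(2) unfolding mdvd_def lk_var ind_def by auto
    moreover have "var v \<in> {u. is_mono t u \<and> (\<exists>d\<in>set (D t). prec d (D t ! q) \<and> mdvd (mk d) (u + mk (D t ! q)))}"
      using v is_mono_var by blast
    ultimately show "\<exists>v\<in>Et t. var v \<in> {u. is_mono t u \<and> (\<exists>d\<in>set (D t). prec d (D t ! q) \<and> mdvd (mk d) (u + mk (D t ! q)))} \<and> mdvd (var v) u"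
      using v(1) by blast
  qed
qed

lemma bound_d:
  assumes d0: "d0 \<in> set (D t)" and d: "d \<in> set (D t)" and p: "prec d d0" and v: "v \<in> Et t"
    and dv: "mdvd (mk d) (var v + mk d0)"
  shows "v \<in> A ` ({1..t} - {fst (snd d0)}) \<union> B ` {1..<t}"
  using d0
proof (cases rule: D_cases)
  case (M1 i j)
  note O = M1
  from d show ?thesis
  proof (cases rule: D_cases)
    case (M1 k l)
    then show ?thesis using O dv v p
      by (cases v) (auto simp: mdvd_mk0 lk_add lk_var lk_mk ind_def prec_def split: if_splits)
  next
    case (M2 k l)
    then show ?thesis using O p by (auto simp: prec_def)
  next
    case (M3 k)
    then show ?thesis using O p by (auto simp: prec_def)
  qed
next
  case (M2 i j)
  note O = M2
  from d show ?thesis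
  proof (cases rule: D_cases)
    case (M1 k l)
    then show ?thesis using O dv v p
      by (cases v) (auto simp: mdvd_mk0 lk_add lk_var lk_mk ind_def prec_def split: if_splits)
  next
    case (M2 k l)
    then show ?thesis using O dv v p
      by (cases v) (auto simp: mdvd_mk1[unfolded One_nat_def] lk_add lk_var lk_mk ind_def prec_def split: if_splits)
  next
    case (M3 k)
    then show ?thesis using O p by (auto simp: prec_def)
  qed
next
  case (M3 i)
  note O = M3
  from d show ?thesis
  proof (cases rule: D_cases)
    case (M1 k l)
    then show ?thesis using O dv v p
      by (cases v) (auto simp: mdvd_mk0 lk_add lk_var lk_mk ind_def prec_def split: if_splits)
  next
    case (M2 k l)
    then show ?thesis using O dv v p
      by (cases v) (auto simp: mdvd_mk1[unfolded One_nat_def] lk_add lk_var lk_mk ind_def prec_def split: if_splits)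
  next
    case (M3 k)
    then show ?thesis using O dv v p
      by (cases v) (auto simp: mdvd_mk2 lk_add lk_var lk_mk ind_def prec_def split: if_splits)
  qed
qed

lemma gauss2: "2 * (\<Sum>i\<in>{2..<t+1}. i - 1) = t * (t - 1::nat)"
proof (induction t)
  case 0 then show ?case by simp
next
  case (Suc t)
  show ?case
  proof (cases "t = 0")
    case True then show ?thesis by simp
  next
    case False
    then have "{2..<Suc t + 1} = insert (t+1) {2..<t+1}" by auto
    then have "(\<Sum>i\<in>{2..<Suc t+1}. i - 1) = t + (\<Sum>i\<in>{2..<t+1}. i - 1)" by simp
    then show ?thesis using Suc False by (cases t) (simp_all add: algebra_simps)
  qed
qed

lemma len_blk: "length (concat (map (\<lambda>i. map (g i) (rev [1..<i])) xs)) = (\<Sum>i\<leftarrow>xs. i - 1)"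
  by (induction xs) auto

lemma len_D: "length (D t) = t ^ 2"
proof -
  have e: "(\<Sum>i\<leftarrow>rev [2..<t+1]. i - 1) = (\<Sum>i\<in>{2..<t+1}. i - 1)"
  proof -
    have "(\<Sum>i\<leftarrow>rev [2..<t+1]. i - 1) = (\<Sum>i\<leftarrow>[2..<t+1]. i - 1)"
      by (simp only: rev_map[symmetric] sum_list_rev)
    also have "\<dots> = sum (\<lambda>i. i - 1) (set [2..<t+1])"
      by (simp only: sum_set_upt_conv_sum_list_nat)
    finally show ?thesis by (simp only: set_upt)
  qed
  have "length (D t) = 2 * (\<Sum>i\<in>{2..<t+1}. i - 1) + t"
    unfolding D_def length_append len_blk e by simp
  also have "\<dots> = t ^ 2" using gauss2[of t] by (cases t) (simp_all add: power2_eq_square algebra_simps)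
  finally show ?thesis .
qed

lemma card_colon_le:
  assumes q: "q < length (D t)"
  shows "card {v\<in>Et t. var v \<in> colon_monos t (gens t) q} \<le> 2 * t - 2"
proof -
  have d0: "D t ! q \<in> set (D t)" using q by simp
  let ?x = "fst (snd (D t ! q))"
  have x: "?x \<in> {1..t}" using d0 by (cases rule: D_cases) auto
  have sub: "{v\<in>Et t. var v \<in> colon_monos t (gens t) q} \<subseteq> A ` ({1..t} - {?x}) \<union> B ` {1..<t}"
    using bound_d[OF d0] unfolding colon_D[OF q] by blast
  have "card (A ` ({1..t} - {?x}) \<union> B ` {1..<t}) \<le> card (A ` ({1..t} - {?x})) + card (B ` {1..<t})"
    by (rule card_Un_le)
  also have "\<dots> \<le> card ({1..t} - {?x}) + card {1..<t}"
    by (intro add_mono card_image_le) auto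
  also have "\<dots> = 2 * t - 2" using x by (simp add: card_Diff_singleton)
  finally have c: "card (A ` ({1..t} - {?x}) \<union> B ` {1..<t}) \<le> 2 * t - 2" .
  have "finite (A ` ({1..t} - {?x}) \<union> B ` {1..<t})" by simp
  from card_mono[OF this sub] c show ?thesis by linarith
qed

lemma attain:
  assumes t: "2 \<le> t"
  shows "\<exists>q<length (D t). 1 \<le> q \<and> card {v\<in>Et t. var v \<in> colon_monos t (gens t) q} = 2 * t - 2"
proof -
  have d0: "(2,t,0) \<in> set (D t)" using t by (intro in_D2) auto
  then obtain q where q: "q < length (D t)" "D t ! q = (2,t,0)" by (auto simp: in_set_conv_nth)
  have "{v\<in>Et t. var v \<in> colon_monos t (gens t) q} = A ` {1..<t} \<union> B ` {1..<t}"
  proof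
    have e: "{1..t} - {t} = {1..<t}" by auto
    show "{v\<in>Et t. var v \<in> colon_monos t (gens t) q} \<subseteq> A ` {1..<t} \<union> B ` {1..<t}"
    proof
      fix v assume "v \<in> {v\<in>Et t. var v \<in> colon_monos t (gens t) q}"
      then obtain d where "v \<in> Et t" "d \<in> set (D t)" "prec d (2,t,0)" "mdvd (mk d) (var v + mk (2,t,0))"
        unfolding colon_D[OF q(1)] q(2) by blast
      from bound_d[OF d0 this(2,3,1,4)] e show "v \<in> A ` {1..<t} \<union> B ` {1..<t}" by simp
    qed
  next
    have "A k \<in> {v\<in>Et t. var v \<in> colon_monos t (gens t) q}" if k: "1 \<le> k" "k < t" for k
    proof -
      have "(1,t,k) \<in> set (D t)" using k by (intro in_D1) auto
      moreover have "prec (1,t,k) (D t ! q)" using q by (simp add: prec_def)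
      moreover have "mdvd (mk (1,t,k)) (var (A k) + mk (D t ! q))"
        using q k by (auto simp: mdvd_mk1 mdvd_mk1[unfolded One_nat_def] lk_add lk_var lk_mk ind_def)
      ultimately show ?thesis unfolding colon_D[OF q(1)] using k is_mono_var[of "A k" t] by auto
    qed
    moreover have "B k \<in> {v\<in>Et t. var v \<in> colon_monos t (gens t) q}" if k: "1 \<le> k" "k < t" for k
    proof -
      have "(0,t,k) \<in> set (D t)" using k by (intro in_D0) auto
      moreover have "prec (0,t,k) (D t ! q)" using q by (simp add: prec_def)
      moreover have "mdvd (mk (0,t,k)) (var (B k) + mk (D t ! q))"
        using q k by (auto simp: mdvd_mk0 lk_add lk_var lk_mk ind_def)
      ultimately show ?thesis unfolding colon_D[OF q(1)] using k is_mono_var[of "B k" t] by auto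
    qed
    ultimately show "A ` {1..<t} \<union> B ` {1..<t} \<subseteq> {v\<in>Et t. var v \<in> colon_monos t (gens t) q}" by auto
  qed
  moreover have "card (A ` {1..<t} \<union> B ` {1..<t}) = 2 * t - 2"
    by (subst card_Un_disjoint) (auto simp: card_image inj_on_def)
  ultimately have c: "card {v\<in>Et t. var v \<in> colon_monos t (gens t) q} = 2 * t - 2" by simp
  have "q \<noteq> 0"
  proof
    assume "q = 0"
    then have "colon_monos t (gens t) q = {}" by (simp add: colon_monos_def)
    then show False using c t by simp
  qed
  then show ?thesis using q c by auto
qed

lemma max_part:
  assumes t: "2 \<le> t"
  shows "Max {n_gens t (gens t) p | p. 2 \<le> p \<and> p \<le> t ^ 2} = 2 * t - 2"
proof (rule Max_eqI)
  have "{n_gens t (gens t) p | p. 2 \<le> p \<and> p \<le> t ^ 2} = (n_gens t (gens t)) ` {2..t^2}"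
    unfolding image_def by (simp add: Setcompr_eq_image atLeastAtMost_def) blast
  then show "finite {n_gens t (gens t) p | p. 2 \<le> p \<and> p \<le> t ^ 2}" by simp
next
  fix y assume "y \<in> {n_gens t (gens t) p | p. 2 \<le> p \<and> p \<le> t ^ 2}"
  then obtain p where p: "2 \<le> p" "p \<le> t^2" "y = n_gens t (gens t) p" by blast
  then have "p - 1 < length (D t)" unfolding len_D by linarith
  from card_colon_le[OF this] p(3) show "y \<le> 2 * t - 2" unfolding n_gens_def by simp
next
  obtain q where q: "q < length (D t)" "1 \<le> q" "card {v\<in>Et t. var v \<in> colon_monos t (gens t) q} = 2 * t - 2"
    using attain[OF t] by blast
  have "n_gens t (gens t) (q+1) = 2 * t - 2" using q(3) by (simp add: n_gens_def)
  moreover have "2 \<le> q + 1" "q + 1 \<le> t^2" using q(1,2) unfolding len_D by linarith+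
  ultimately have "\<exists>p. 2 * t - 2 = n_gens t (gens t) p \<and> 2 \<le> p \<and> p \<le> t^2"
    by (intro exI[of _ "q+1"]) simp
  then show "2 * t - 2 \<in> {n_gens t (gens t) p | p. 2 \<le> p \<and> p \<le> t ^ 2}" by simp
qed

lemma img_sup: "finite S \<Longrightarrow> Poly_Mapping.keys m \<subseteq> S \<Longrightarrow>
   img m v = (\<Sum>e\<in>S. if v \<in> ends e then Poly_Mapping.lookup m e else 0)"
  unfolding img_def by (rule sum.mono_neutral_left) (auto simp: Poly_Mapping.in_keys_iff)

lemma img_add: "img (m + n) v = img m v + img n v"
proof -
  let ?S = "Poly_Mapping.keys m \<union> Poly_Mapping.keys n"
  have f: "finite ?S" by simp
  have "img (m + n) v = (\<Sum>e\<in>?S. if v \<in> ends e then Poly_Mapping.lookup (m+n) e else 0)"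
    using Poly_Mapping.keys_add[of m n] by (intro img_sup f) auto
  also have "\<dots> = (\<Sum>e\<in>?S. (if v \<in> ends e then Poly_Mapping.lookup m e else 0) + (if v \<in> ends e then Poly_Mapping.lookup n e else 0))"
    by (intro sum.cong) (auto simp: lk_add)
  also have "\<dots> = img m v + img n v"
    by (simp add: sum.distrib img_sup[OF f])
  finally show ?thesis .
qed

lemma img_var: "img (var e) v = (if v \<in> ends e then 1 else 0)"
  by (simp add: img_def lookup_var)

lemma mdeg_sup: "finite S \<Longrightarrow> Poly_Mapping.keys m \<subseteq> S \<Longrightarrow>
   mdeg m = (\<Sum>e\<in>S. Poly_Mapping.lookup m e)"
  unfolding mdeg_def by (rule sum.mono_neutral_left) (auto simp: Poly_Mapping.in_keys_iff)

lemma mdeg_add: "mdeg (m + n) = mdeg m + mdeg n"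
proof -
  let ?S = "Poly_Mapping.keys m \<union> Poly_Mapping.keys n"
  have f: "finite ?S" by simp
  have "mdeg (m + n) = (\<Sum>e\<in>?S. Poly_Mapping.lookup (m+n) e)"
    using Poly_Mapping.keys_add[of m n] by (intro mdeg_sup f) auto
  also have "\<dots> = mdeg m + mdeg n"
    by (simp add: lk_add sum.distrib mdeg_sup[OF f])
  finally show ?thesis .
qed

lemma mdeg_var: "mdeg (var e) = 1"
  by (simp add: mdeg_def lookup_var)

lemma idx_inj: "v \<in> Et t \<Longrightarrow> w \<in> Et t \<Longrightarrow> idx t v = idx t w \<Longrightarrow> v = w"
  by (cases v; cases w) auto

lemma gl_irrefl: "\<not> grevlex_less t m m"
  by (simp add: grevlex_less_def)

lemma gl_trans:
  assumes a1: "grevlex_less t m1 m2" and a2: "grevlex_less t m2 m3"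
  shows "grevlex_less t m1 m3"
proof (cases "mdeg m1 < mdeg m3")
  case True then show ?thesis by (simp add: grevlex_less_def)
next
  case False
  have "mdeg m1 \<le> mdeg m2" "mdeg m2 \<le> mdeg m3" using a1 a2 by (auto simp: grevlex_less_def)
  with False have e: "mdeg m1 = mdeg m2" "mdeg m2 = mdeg m3" by auto
  from a1 e obtain v1 where v1: "v1 \<in> Et t" "Poly_Mapping.lookup m1 v1 > Poly_Mapping.lookup m2 v1"
    "\<forall>w\<in>Et t. idx t w > idx t v1 \<longrightarrow> Poly_Mapping.lookup m1 w = Poly_Mapping.lookup m2 w"
    by (auto simp: grevlex_less_def)
  from a2 e obtain v2 where v2: "v2 \<in> Et t" "Poly_Mapping.lookup m2 v2 > Poly_Mapping.lookup m3 v2"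
    "\<forall>w\<in>Et t. idx t w > idx t v2 \<longrightarrow> Poly_Mapping.lookup m2 w = Poly_Mapping.lookup m3 w"
    by (auto simp: grevlex_less_def)
  consider "idx t v1 < idx t v2" | "idx t v1 = idx t v2" | "idx t v2 < idx t v1" by linarith
  then show ?thesis
  proof cases
    case 1
    then have "Poly_Mapping.lookup m1 v2 > Poly_Mapping.lookup m3 v2" using v1 v2 by auto
    moreover have "\<forall>w\<in>Et t. idx t w > idx t v2 \<longrightarrow> Poly_Mapping.lookup m1 w = Poly_Mapping.lookup m3 w"
      using v1 v2 1 by auto
    ultimately show ?thesis using e v2(1) unfolding grevlex_less_def by auto
  next
    case 2
    then have "v1 = v2" using idx_inj v1(1) v2(1) by blast
    then show ?thesis using e v1 v2 unfolding grevlex_less_def by (metis less_trans)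
  next
    case 3
    then have "Poly_Mapping.lookup m1 v1 > Poly_Mapping.lookup m3 v1" using v1 v2 by auto
    moreover have "\<forall>w\<in>Et t. idx t w > idx t v1 \<longrightarrow> Poly_Mapping.lookup m1 w = Poly_Mapping.lookup m3 w"
      using v1 v2 3 by auto
    ultimately show ?thesis using e v1(1) unfolding grevlex_less_def by auto
  qed
qed

lemma gl_add: "grevlex_less t m n \<Longrightarrow> grevlex_less t (c + m) (c + n)"
  unfolding grevlex_less_def mdeg_add lk_add by auto

definition pt :: "nat \<times> nat \<times> nat \<Rightarrow> (edge \<Rightarrow>\<^sub>0 nat)" where
  "pt d = (case d of (c,x,y) \<Rightarrow> if c = 0 then var (A y) + var (B x)
      else if c = 1 then var (Ee 1) + var (Ee 3) + var (B x) + var (B y) + var (Fe 2)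
      else var (Ee 1) + var (Ee 3) + var (B x) + var (B x) + var (Fe 2))"

lemma lk_pt: "Poly_Mapping.lookup (pt (c,x,y)) w = (if c = 0 then ind (A y) w + ind (B x) w
   else if c = 1 then ind (Ee 1) w + ind (Ee 3) w + ind (B x) w + ind (B y) w + ind (Fe 2) w
   else ind (Ee 1) w + ind (Ee 3) w + 2 * ind (B x) w + ind (Fe 2) w)"
  by (simp add: pt_def lk_add lk_var)

lemma pt_img: assumes "d \<in> set (D t)" shows "img (pt d) = img (mk d)"
proof
  fix v
  from assms show "img (pt d) v = img (mk d) v"
    by (cases rule: D_cases; cases v) (auto simp: pt_def mk_def f1f3e2_def img_add img_var)
qed

lemma idx_big: "w \<in> Et t \<Longrightarrow> idx t w > idx t (B x) \<Longrightarrow> \<exists>l. w = B l \<and> x < l"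
  by (cases w) auto

lemma pt_less: assumes "d \<in> set (D t)" shows "grevlex_less t (pt d) (mk d)"
  using assms
proof (cases rule: D_cases)
  case (M1 i j)
  have "mdeg (pt d) = mdeg (mk d)" using M1 by (simp add: pt_def mk_def mdeg_add mdeg_var)
  moreover have "\<forall>w\<in>Et t. idx t w > idx t (B i) \<longrightarrow> Poly_Mapping.lookup (pt d) w = Poly_Mapping.lookup (mk d) w"
    using M1 idx_big[of _ t i] by (force simp: lk_pt lk_mk ind_def)
  ultimately show ?thesis using M1 unfolding grevlex_less_def
    by (intro disjI2 conjI bexI[of _ "B i"]) (auto simp: lk_pt lk_mk ind_def)
next
  case (M2 i j)
  have "mdeg (pt d) = mdeg (mk d)" using M2 by (simp add: pt_def mk_def f1f3e2_def mdeg_add mdeg_var)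
  moreover have "\<forall>w\<in>Et t. idx t w > idx t (B j) \<longrightarrow> Poly_Mapping.lookup (pt d) w = Poly_Mapping.lookup (mk d) w"
    using M2 idx_big[of _ t j] by (force simp: lk_pt lk_mk ind_def)
  ultimately show ?thesis using M2 unfolding grevlex_less_def
    by (intro disjI2 conjI bexI[of _ "B j"]) (auto simp: lk_pt lk_mk ind_def)
next
  case (M3 i)
  have "mdeg (pt d) = mdeg (mk d)" using M3 by (simp add: pt_def mk_def f1f3e2_def mdeg_add mdeg_var)
  moreover have "\<forall>w\<in>Et t. idx t w > idx t (B i) \<longrightarrow> Poly_Mapping.lookup (pt d) w = Poly_Mapping.lookup (mk d) w"
    using M3 idx_big[of _ t i] by (force simp: lk_pt lk_mk ind_def)
  ultimately show ?thesis using M3 unfolding grevlex_less_def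
    by (intro disjI2 conjI bexI[of _ "B i"]) (auto simp: lk_pt lk_mk ind_def)
qed

lemma is_mono_add: "is_mono t m \<Longrightarrow> is_mono t n \<Longrightarrow> is_mono t (m + n)"
  unfolding is_mono_def using Poly_Mapping.keys_add[of m n] by blast

lemma is_mono_minus: "is_mono t m \<Longrightarrow> is_mono t (m - n)"
  unfolding is_mono_def by (auto simp: Poly_Mapping.in_keys_iff Poly_Mapping.lookup_minus)

lemma pt_mono: assumes "d \<in> set (D t)" shows "is_mono t (pt d)"
  using assms by (cases rule: D_cases) (auto simp: pt_def intro!: is_mono_add is_mono_var)

lemma mk_mono: assumes "d \<in> set (D t)" shows "is_mono t (mk d)"
  using assms by (cases rule: D_cases) (auto simp: mk_def f1f3e2_def intro!: is_mono_add is_mono_var)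

definition mu :: "nat \<Rightarrow> (edge \<Rightarrow>\<^sub>0 nat) \<Rightarrow> nat" where
  "mu t m = (\<Sum>k\<in>{1..t}. k * Poly_Mapping.lookup m (A k))"

lemma mu_add: "mu t (m + n) = mu t m + mu t n"
  by (simp add: mu_def lk_add algebra_simps sum.distrib)

lemma mu_varA: "1 \<le> i \<Longrightarrow> i \<le> t \<Longrightarrow> mu t (var (A i)) = i"
proof -
  assume "1 \<le> i" "i \<le> t"
  have "mu t (var (A i)) = (\<Sum>k\<in>{1..t}. if i = k then k else 0)"
    unfolding mu_def by (intro sum.cong) (auto simp: lk_var ind_def)
  then show ?thesis using \<open>1 \<le> i\<close> \<open>i \<le> t\<close> by simp
qed

lemma mu_varB: "mu t (var (B i)) = 0" by (simp add: mu_def lk_var ind_def)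
lemma mu_varE: "mu t (var (Ee i)) = 0" by (simp add: mu_def lk_var ind_def)
lemma mu_varF: "mu t (var (Fe i)) = 0" by (simp add: mu_def lk_var ind_def)

lemma pt_mu: assumes "d \<in> set (D t)" shows "mu t (pt d) < mu t (mk d)"
  using assms
  by (cases rule: D_cases)
     (auto simp: pt_def mk_def f1f3e2_def mu_add mu_varA mu_varB mu_varE mu_varF)

lemma split_dvd: "mdvd n m \<Longrightarrow> m = (m - n) + n"
  by (rule poly_mapping_eqI) (auto simp: mdvd_def lk_add Poly_Mapping.lookup_minus)

lemma Et_eq: "Et t = A ` {1..t} \<union> B ` {1..t} \<union> Ee ` {1..3} \<union> Fe ` {1..3}"
  by (auto simp: Et_def)

lemma finite_Et: "finite (Et t)" by (simp add: Et_eq)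

lemma three: "{1..3::nat} = {1,2,3}" by auto

lemma reidx: "inj C \<Longrightarrow> sum f (C ` S) = (\<Sum>i\<in>S. f (C i))"
  by (subst sum.reindex) (auto simp: inj_on_def inj_def)

lemma sum_Et: "sum f (Et t) = (\<Sum>i\<in>{1..t}. f (A i)) + (\<Sum>i\<in>{1..t}. f (B i))
   + (f (Ee 1) + f (Ee 2) + f (Ee 3)) + (f (Fe 1) + f (Fe 2) + f (Fe 3))"
proof -
  have "sum f (Et t) = sum f (A ` {1..t}) + sum f (B ` {1..t}) + sum f (Ee ` {1..3}) + sum f (Fe ` {1..3})"
    unfolding Et_eq by (subst sum.union_disjoint; auto)+
  also have "\<dots> = (\<Sum>i\<in>{1..t}. f (A i)) + (\<Sum>i\<in>{1..t}. f (B i))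
   + (\<Sum>k\<in>{1..3}. f (Ee k)) + (\<Sum>k\<in>{1..3}. f (Fe k))"
    by (simp add: reidx inj_def)
  also have "(\<Sum>k\<in>{1..3::nat}. f (Ee k)) = f (Ee 1) + f (Ee 2) + f (Ee 3)"
    unfolding three by (simp add: add.assoc)
  also have "(\<Sum>k\<in>{1..3::nat}. f (Fe k)) = f (Fe 1) + f (Fe 2) + f (Fe 3)"
    unfolding three by (simp add: add.assoc)
  finally show ?thesis .
qed

lemma img_formula: "is_mono t m \<Longrightarrow> img m v =
    (\<Sum>i\<in>{1..t}. if v \<in> ends (A i) then Poly_Mapping.lookup m (A i) else 0)
  + (\<Sum>i\<in>{1..t}. if v \<in> ends (B i) then Poly_Mapping.lookup m (B i) else 0)
  + ((if v \<in> ends (Ee 1) then Poly_Mapping.lookup m (Ee 1) else 0) + (if v \<in> ends (Ee 2) then Poly_Mapping.lookup m (Ee 2) else 0) + (if v \<in> ends (Ee 3) then Poly_Mapping.lookup m (Ee 3) else 0))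
  + ((if v \<in> ends (Fe 1) then Poly_Mapping.lookup m (Fe 1) else 0) + (if v \<in> ends (Fe 2) then Poly_Mapping.lookup m (Fe 2) else 0) + (if v \<in> ends (Fe 3) then Poly_Mapping.lookup m (Fe 3) else 0))"
  unfolding is_mono_def by (simp add: img_sup[OF finite_Et] sum_Et)


lemma imgZ1: "is_mono t m \<Longrightarrow> img m (Z 1) = Poly_Mapping.lookup m (Ee 1) + Poly_Mapping.lookup m (Ee 2)"
  by (subst img_formula, assumption) simp
lemma imgZ2: "is_mono t m \<Longrightarrow> img m (Z 2) = Poly_Mapping.lookup m (Ee 2) + Poly_Mapping.lookup m (Ee 3)"
  by (subst img_formula, assumption) simp
lemma imgW1: "is_mono t m \<Longrightarrow> img m (W 1) = Poly_Mapping.lookup m (Fe 1) + Poly_Mapping.lookup m (Fe 2)"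
  by (subst img_formula, assumption) simp
lemma imgW2: "is_mono t m \<Longrightarrow> img m (W 2) = Poly_Mapping.lookup m (Fe 2) + Poly_Mapping.lookup m (Fe 3)"
  by (subst img_formula, assumption) simp
lemma imgX1: "is_mono t m \<Longrightarrow> img m (X 1) = (\<Sum>i\<in>{1..t}. Poly_Mapping.lookup m (A i)) + Poly_Mapping.lookup m (Ee 1) + Poly_Mapping.lookup m (Ee 3)"
  by (subst img_formula, assumption) simp
lemma imgX2: "is_mono t m \<Longrightarrow> img m (X 2) = (\<Sum>i\<in>{1..t}. Poly_Mapping.lookup m (B i)) + Poly_Mapping.lookup m (Fe 1) + Poly_Mapping.lookup m (Fe 3)"
  by (subst img_formula, assumption) simp
lemma imgY: assumes "is_mono t m" "1 \<le> k" "k \<le> t"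
  shows "img m (Y k) = Poly_Mapping.lookup m (A k) + Poly_Mapping.lookup m (B k)"
proof -
  have a: "(\<Sum>i\<in>{1..t}. if Y k \<in> ends (A i) then Poly_Mapping.lookup m (A i) else 0)
     = (\<Sum>i\<in>{1..t}. if i = k then Poly_Mapping.lookup m (A i) else 0)"
    by (intro sum.cong) auto
  have b: "(\<Sum>i\<in>{1..t}. if Y k \<in> ends (B i) then Poly_Mapping.lookup m (B i) else 0)
     = (\<Sum>i\<in>{1..t}. if i = k then Poly_Mapping.lookup m (B i) else 0)"
    by (intro sum.cong) auto
  have "img m (Y k) = (\<Sum>i\<in>{1..t}. if i = k then Poly_Mapping.lookup m (A i) else 0)
     + (\<Sum>i\<in>{1..t}. if i = k then Poly_Mapping.lookup m (B i) else 0)"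
    unfolding img_formula[OF assms(1)] a b by simp
  also have "\<dots> = Poly_Mapping.lookup m (A k) + Poly_Mapping.lookup m (B k)"
    using assms(2,3) by simp
  finally show ?thesis .
qed

definition std :: "nat \<Rightarrow> (edge \<Rightarrow>\<^sub>0 nat) \<Rightarrow> bool" where
  "std t m \<longleftrightarrow> (\<forall>d\<in>set (D t). \<not> mdvd (mk d) m)"

lemma std_S1: "std t m \<Longrightarrow> 1 \<le> j \<Longrightarrow> j < i \<Longrightarrow> i \<le> t \<Longrightarrow>
   Poly_Mapping.lookup m (A i) = 0 \<or> Poly_Mapping.lookup m (B j) = 0"
proof -
  assume s: "std t m" and ij: "1 \<le> j" "j < i" "i \<le> t"
  have "(0,i,j) \<in> set (D t)" using ij by (rule in_D0)
  then have "\<not> mdvd (mk (0,i,j)) m" using s unfolding std_def by blast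
  then show ?thesis unfolding mdvd_mk0 by linarith
qed

lemma sum_le1:
  assumes fin: "finite S" and le: "\<forall>i\<in>S. f i \<le> (1::nat)" and pw: "\<forall>i\<in>S. \<forall>j\<in>S. i \<noteq> j \<longrightarrow> f i = 0 \<or> f j = 0"
  shows "sum f S \<le> 1"
proof (cases "\<forall>i\<in>S. f i = 0")
  case True then show ?thesis by simp
next
  case False
  then obtain i where i: "i \<in> S" "f i \<noteq> 0" by blast
  have r: "sum f S = f i + sum f (S - {i})" using fin i(1) by (rule sum.remove)
  have z: "\<forall>j\<in>S - {i}. f j = 0"
  proof
    fix j assume j: "j \<in> S - {i}"
    then have "j \<in> S" "i \<noteq> j" by auto
    then have "f i = 0 \<or> f j = 0" using bspec[OF bspec[OF pw i(1)]] by simp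
    then show "f j = 0" using i(2) by simp
  qed
  have "sum f (S - {i}) = 0" using z by (rule sum.neutral)
  then show ?thesis using r le i(1) by simp
qed

lemma std_S2:
  assumes "std t m" "1 \<le> Poly_Mapping.lookup m (Fe 1)" "1 \<le> Poly_Mapping.lookup m (Fe 3)" "1 \<le> Poly_Mapping.lookup m (Ee 2)"
  shows "(\<Sum>i\<in>{1..t}. Poly_Mapping.lookup m (A i)) \<le> 1"
proof (rule sum_le1)
  show "\<forall>i\<in>{1..t}. Poly_Mapping.lookup m (A i) \<le> 1"
  proof
    fix i assume "i \<in> {1..t}"
    then have "(2,i,0) \<in> set (D t)" by (intro in_D2) auto
    then show "Poly_Mapping.lookup m (A i) \<le> 1" using assms by (auto simp: std_def mdvd_mk2)
  qed
  show "\<forall>i\<in>{1..t}. \<forall>j\<in>{1..t}. i \<noteq> j \<longrightarrow> Poly_Mapping.lookup m (A i) = 0 \<or> Poly_Mapping.lookup m (A j) = 0"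
  proof (intro ballI impI)
    fix i j assume ij: "i \<in> {1..t}" "j \<in> {1..t}" "i \<noteq> j"
    then have "(1, max i j, min i j) \<in> set (D t)" by (intro in_D1) auto
    moreover have "min i j \<noteq> max i j" using ij by auto
    ultimately have "\<not> (1 \<le> Poly_Mapping.lookup m (A (max i j)) \<and> 1 \<le> Poly_Mapping.lookup m (A (min i j)))"
      using assms by (auto simp: std_def mdvd_mk1 mdvd_mk1[unfolded One_nat_def])
    then show "Poly_Mapping.lookup m (A i) = 0 \<or> Poly_Mapping.lookup m (A j) = 0"
      by (cases "i \<le> j") (auto simp: max_def min_def)
  qed
qed simp

lemma a_formula:
  assumes s: "std t m" and k: "1 \<le> k" "k \<le> t"
  shows "Poly_Mapping.lookup m (A k) = min (Poly_Mapping.lookup m (A k) + Poly_Mapping.lookup m (B k))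
     ((\<Sum>i\<in>{1..t}. Poly_Mapping.lookup m (A i)) - (\<Sum>i\<in>{1..<k}. Poly_Mapping.lookup m (A i)))"
proof -
  let ?a = "\<lambda>i. Poly_Mapping.lookup m (A i)"
  have e: "{1..t} = {1..<k} \<union> ({k} \<union> {k<..t})" using k by auto
  have s1: "(\<Sum>i\<in>{1..t}. ?a i) = (\<Sum>i\<in>{1..<k}. ?a i) + (\<Sum>i\<in>{k} \<union> {k<..t}. ?a i)"
    unfolding e by (rule sum.union_disjoint) auto
  have s2: "(\<Sum>i\<in>{k} \<union> {k<..t}. ?a i) = ?a k + (\<Sum>i\<in>{k<..t}. ?a i)"
    by (subst sum.union_disjoint) auto
  have split: "(\<Sum>i\<in>{1..t}. ?a i) = (\<Sum>i\<in>{1..<k}. ?a i) + (?a k + (\<Sum>i\<in>{k<..t}. ?a i))"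
    using s1 s2 by simp
  show ?thesis
  proof (cases "(\<Sum>i\<in>{k<..t}. ?a i) = 0")
    case True
    then show ?thesis using split by simp
  next
    case False
    then obtain i where i: "i \<in> {k<..t}" "?a i \<noteq> 0" by (metis sum.neutral)
    then have "Poly_Mapping.lookup m (B k) = 0" using std_S1[OF s k(1), of i] by auto
    then show ?thesis using split by simp
  qed
qed

lemma arith_key:
  fixes e1 e2 e3 f1 f2 f3 al be e1' e2' e3' f1' f2' f3' al' be' :: nat
  assumes "e1 + e2 = e1' + e2'" "e2 + e3 = e2' + e3'" "f1 + f2 = f1' + f2'" "f2 + f3 = f2' + f3'"
    "al + e1 + e3 = al' + e1' + e3'" "be + f1 + f3 = be' + f1' + f3'" "al + be = al' + be'"
    "1 \<le> f1 \<and> 1 \<le> f3 \<and> 1 \<le> e2 \<longrightarrow> al \<le> 1"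
    "1 \<le> f1' \<and> 1 \<le> f3' \<and> 1 \<le> e2' \<longrightarrow> al' \<le> 1"
  shows "e2 = e2' \<and> f2 = f2'"
proof -
  have "\<not> e2 < e2'"
  proof
    assume "e2 < e2'"
    then have "1 \<le> f1' \<and> 1 \<le> f3' \<and> 1 \<le> e2'" "2 \<le> al'" using assms(1-7) by linarith+
    then show False using assms(9) by linarith
  qed
  moreover have "\<not> e2' < e2"
  proof
    assume "e2' < e2"
    then have "1 \<le> f1 \<and> 1 \<le> f3 \<and> 1 \<le> e2" "2 \<le> al" using assms(1-7) by linarith+
    then show False using assms(8) by linarith
  qed
  ultimately have "e2 = e2'" by linarith
  then show ?thesis using assms(1-7) by linarith
qed

lemma uniq:
  assumes m: "is_mono t m" and m': "is_mono t m'" and s: "std t m" and s': "std t m'" and ie: "img m = img m'"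
  shows "m = m'"
proof -
  let ?L = "Poly_Mapping.lookup m" and ?L' = "Poly_Mapping.lookup m'"
  have eqv: "img m v = img m' v" for v using ie by simp
  have z1: "?L (Ee 1) + ?L (Ee 2) = ?L' (Ee 1) + ?L' (Ee 2)" using eqv[of "Z 1"] imgZ1[OF m] imgZ1[OF m'] by simp
  have z2: "?L (Ee 2) + ?L (Ee 3) = ?L' (Ee 2) + ?L' (Ee 3)" using eqv[of "Z 2"] imgZ2[OF m] imgZ2[OF m'] by simp
  have w1: "?L (Fe 1) + ?L (Fe 2) = ?L' (Fe 1) + ?L' (Fe 2)" using eqv[of "W 1"] imgW1[OF m] imgW1[OF m'] by simp
  have w2: "?L (Fe 2) + ?L (Fe 3) = ?L' (Fe 2) + ?L' (Fe 3)" using eqv[of "W 2"] imgW2[OF m] imgW2[OF m'] by simp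
  have x1: "(\<Sum>i\<in>{1..t}. ?L (A i)) + ?L (Ee 1) + ?L (Ee 3) = (\<Sum>i\<in>{1..t}. ?L' (A i)) + ?L' (Ee 1) + ?L' (Ee 3)"
    using eqv[of "X 1"] imgX1[OF m] imgX1[OF m'] by simp
  have x2: "(\<Sum>i\<in>{1..t}. ?L (B i)) + ?L (Fe 1) + ?L (Fe 3) = (\<Sum>i\<in>{1..t}. ?L' (B i)) + ?L' (Fe 1) + ?L' (Fe 3)"
    using eqv[of "X 2"] imgX2[OF m] imgX2[OF m'] by simp
  have y: "?L (A k) + ?L (B k) = ?L' (A k) + ?L' (B k)" if "1 \<le> k" "k \<le> t" for k
    using eqv[of "Y k"] imgY[OF m that] imgY[OF m' that] by simp
  have ab: "(\<Sum>i\<in>{1..t}. ?L (A i)) + (\<Sum>i\<in>{1..t}. ?L (B i)) = (\<Sum>i\<in>{1..t}. ?L' (A i)) + (\<Sum>i\<in>{1..t}. ?L' (B i))"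
  proof -
    have "(\<Sum>i\<in>{1..t}. ?L (A i)) + (\<Sum>i\<in>{1..t}. ?L (B i)) = (\<Sum>i\<in>{1..t}. ?L (A i) + ?L (B i))"
      by (simp add: sum.distrib)
    also have "\<dots> = (\<Sum>i\<in>{1..t}. ?L' (A i) + ?L' (B i))" by (intro sum.cong) (auto simp: y)
    also have "\<dots> = (\<Sum>i\<in>{1..t}. ?L' (A i)) + (\<Sum>i\<in>{1..t}. ?L' (B i))" by (simp add: sum.distrib)
    finally show ?thesis .
  qed
  have c: "1 \<le> ?L (Fe 1) \<and> 1 \<le> ?L (Fe 3) \<and> 1 \<le> ?L (Ee 2) \<longrightarrow> (\<Sum>i\<in>{1..t}. ?L (A i)) \<le> 1"
    using std_S2[OF s] by blast
  have c': "1 \<le> ?L' (Fe 1) \<and> 1 \<le> ?L' (Fe 3) \<and> 1 \<le> ?L' (Ee 2) \<longrightarrow> (\<Sum>i\<in>{1..t}. ?L' (A i)) \<le> 1"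
    using std_S2[OF s'] by blast
  from arith_key[OF z1 z2 w1 w2 x1 x2 ab c c'] have e2: "?L (Ee 2) = ?L' (Ee 2)" and f2: "?L (Fe 2) = ?L' (Fe 2)"
    by auto
  have al: "(\<Sum>i\<in>{1..t}. ?L (A i)) = (\<Sum>i\<in>{1..t}. ?L' (A i))" using x1 z1 z2 e2 by linarith
  have aeq: "1 \<le> k \<longrightarrow> k \<le> t \<longrightarrow> ?L (A k) = ?L' (A k)" for k
  proof (induction k rule: less_induct)
    case (less k)
    show ?case
    proof (intro impI)
      assume k: "1 \<le> k" "k \<le> t"
      have ps: "(\<Sum>i\<in>{1..<k}. ?L (A i)) = (\<Sum>i\<in>{1..<k}. ?L' (A i))"
        by (intro sum.cong refl) (use less k in auto)
      show "?L (A k) = ?L' (A k)"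
        using a_formula[OF s k] a_formula[OF s' k] y[OF k] ps al by simp
    qed
  qed
  show ?thesis
  proof (rule poly_mapping_eqI)
    fix e
    show "?L e = ?L' e"
    proof (cases "e \<in> Et t")
      case False
      then have "e \<notin> Poly_Mapping.keys m" "e \<notin> Poly_Mapping.keys m'" using m m' unfolding is_mono_def by auto
      then show ?thesis by (simp add: Poly_Mapping.in_keys_iff)
    next
      case True
      then show ?thesis
      proof (cases e)
        case (A k) then show ?thesis using True aeq by auto
      next
        case (B k) then show ?thesis using True aeq[of k] y[of k] by auto
      next
        case (Ee k)
        then have "k = 1 \<or> k = 2 \<or> k = 3" using True by auto
        then show ?thesis using Ee z1 z2 e2 by auto
      next
        case (Fe k)
        then have "k = 1 \<or> k = 2 \<or> k = 3" using True by auto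
        then show ?thesis using Fe w1 w2 f2 by auto
      qed
    qed
  qed
qed

lemma reduce:
  assumes d: "d \<in> set (D t)" and dv: "mdvd (mk d) m" and m: "is_mono t m"
  shows "is_mono t ((m - mk d) + pt d)" "img ((m - mk d) + pt d) = img m"
    "mu t ((m - mk d) + pt d) < mu t m" "grevlex_less t ((m - mk d) + pt d) m"
proof -
  have sp: "m = (m - mk d) + mk d" using dv by (rule split_dvd)
  show "is_mono t ((m - mk d) + pt d)" using is_mono_add[OF is_mono_minus[OF m] pt_mono[OF d]] .
  show "img ((m - mk d) + pt d) = img m"
  proof
    fix v
    have "img m v = img (m - mk d) v + img (mk d) v" by (subst sp) (simp add: img_add)
    then show "img ((m - mk d) + pt d) v = img m v" by (simp add: img_add pt_img[OF d])
  qed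
  have "mu t m = mu t (m - mk d) + mu t (mk d)" by (subst sp) (simp add: mu_add)
  then show "mu t ((m - mk d) + pt d) < mu t m" using pt_mu[OF d] by (simp add: mu_add)
  show "grevlex_less t ((m - mk d) + pt d) m"
    using gl_add[OF pt_less[OF d], of "m - mk d"] sp by simp
qed

lemma min_std:
  assumes s: "std t m" and m: "is_mono t m"
  shows "is_mono t m' \<Longrightarrow> img m' = img m \<Longrightarrow> m' \<noteq> m \<Longrightarrow> grevlex_less t m m'"
proof (induction "mu t m'" arbitrary: m' rule: less_induct)
  case less
  show ?case
  proof (cases "std t m'")
    case True
    have "m' = m" by (rule uniq[OF less.prems(1) m True s less.prems(2)])
    then show ?thesis using less.prems(3) by simp
  next
    case False
    then obtain d where d: "d \<in> set (D t)" "mdvd (mk d) m'" unfolding std_def by blast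
    note r = reduce[OF d less.prems(1)]
    show ?thesis
    proof (cases "(m' - mk d) + pt d = m")
      case True
      then show ?thesis using r(4) by simp
    next
      case False
      have "grevlex_less t m ((m' - mk d) + pt d)"
        using less.hyps[OF r(3) r(1)] r(2) less.prems(2) False by simp
      then show ?thesis using r(4) gl_trans by blast
    qed
  qed
qed

lemma ns_iff:
  assumes m: "is_mono t m"
  shows "(\<exists>m'. is_mono t m' \<and> img m' = img m \<and> m' \<noteq> m \<and> grevlex_less t m' m) \<longleftrightarrow> (\<exists>d\<in>set (D t). mdvd (mk d) m)"
proof
  assume "\<exists>m'. is_mono t m' \<and> img m' = img m \<and> m' \<noteq> m \<and> grevlex_less t m' m"
  then obtain m' where m': "is_mono t m'" "img m' = img m" "m' \<noteq> m" "grevlex_less t m' m" by blast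
  show "\<exists>d\<in>set (D t). mdvd (mk d) m"
  proof (rule ccontr)
    assume "\<not> (\<exists>d\<in>set (D t). mdvd (mk d) m)"
    then have "std t m" unfolding std_def by blast
    from min_std[OF this m m'(1-3)] m'(4) have "grevlex_less t m m" using gl_trans by blast
    then show False using gl_irrefl by blast
  qed
next
  assume "\<exists>d\<in>set (D t). mdvd (mk d) m"
  then obtain d where d: "d \<in> set (D t)" "mdvd (mk d) m" by blast
  note r = reduce[OF d m]
  have "(m - mk d) + pt d \<noteq> m" using r(4) gl_irrefl by metis
  then show "\<exists>m'. is_mono t m' \<and> img m' = img m \<and> m' \<noteq> m \<and> grevlex_less t m' m"
    using r by blast
qed

lemma init_iff:
  "m \<in> initial_monos TYPE('k::field) t \<longleftrightarrow>
     is_mono t m \<and> (\<exists>m'. is_mono t m' \<and> img m' = img m \<and> m' \<noteq> m \<and> grevlex_less t m' m)"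
proof
  assume "m \<in> initial_monos TYPE('k) t"
  then obtain p :: "(edge \<Rightarrow>\<^sub>0 nat) \<Rightarrow>\<^sub>0 'k" where p: "p \<in> toric_ideal t" "p \<noteq> 0" "is_lead t p m"
    unfolding initial_monos_def by blast
  have mk: "m \<in> Poly_Mapping.keys p" using p(3) unfolding is_lead_def by blast
  have ip: "is_poly t p" using p(1) unfolding toric_ideal_def by blast
  then have mm: "is_mono t m" using mk unfolding is_poly_def by blast
  let ?F = "{x \<in> Poly_Mapping.keys p. img x = img m}"
  have s0: "(\<Sum>x\<in>?F. Poly_Mapping.lookup p x) = 0" using p(1) unfolding toric_ideal_def by blast
  have "\<exists>x\<in>?F. x \<noteq> m"
  proof (rule ccontr)
    assume "\<not> (\<exists>x\<in>?F. x \<noteq> m)"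
    then have "?F = {m}" using mk by auto
    then have "Poly_Mapping.lookup p m = 0" using s0 by simp
    then show False using mk by (simp add: Poly_Mapping.in_keys_iff)
  qed
  then obtain x where x: "x \<in> Poly_Mapping.keys p" "img x = img m" "x \<noteq> m" by blast
  have "grevlex_less t x m" using p(3) x unfolding is_lead_def by blast
  moreover have "is_mono t x" using ip x(1) unfolding is_poly_def by blast
  ultimately show "is_mono t m \<and> (\<exists>m'. is_mono t m' \<and> img m' = img m \<and> m' \<noteq> m \<and> grevlex_less t m' m)"
    using mm x by blast
next
  assume "is_mono t m \<and> (\<exists>m'. is_mono t m' \<and> img m' = img m \<and> m' \<noteq> m \<and> grevlex_less t m' m)"
  then obtain m' where mm: "is_mono t m" and m': "is_mono t m'" "img m' = img m" "m' \<noteq> m" "grevlex_less t m' m" by blast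
  define p :: "(edge \<Rightarrow>\<^sub>0 nat) \<Rightarrow>\<^sub>0 'k" where "p = Poly_Mapping.single m 1 - Poly_Mapping.single m' 1"
  have lp: "Poly_Mapping.lookup p x = (if x = m then 1 else if x = m' then -1 else 0)" for x
    using m'(3) by (auto simp: p_def Poly_Mapping.lookup_minus Poly_Mapping.lookup_single when_def)
  have kp: "Poly_Mapping.keys p = {m, m'}"
    by (auto simp: Poly_Mapping.in_keys_iff lp split: if_splits)
  have "p \<in> toric_ideal t"
    unfolding toric_ideal_def
  proof (intro CollectI conjI allI)
    show "is_poly t p" unfolding is_poly_def kp using mm m'(1) by auto
    fix u
    have e: "{x \<in> Poly_Mapping.keys p. img x = u} = (if img m = u then {m, m'} else {})"
      unfolding kp using m'(2) by auto
    show "(\<Sum>x\<in>{x \<in> Poly_Mapping.keys p. img x = u}. Poly_Mapping.lookup p x) = 0"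
      unfolding e using m'(3) by (simp add: lp)
  qed
  moreover have "p \<noteq> 0"
  proof
    assume "p = 0"
    then have "Poly_Mapping.lookup p m = 0" by simp
    then show False by (simp add: lp)
  qed
  moreover have "is_lead t p m" unfolding is_lead_def kp using m'(4) by auto
  ultimately show "m \<in> initial_monos TYPE('k) t" unfolding initial_monos_def by blast
qed

lemma init_eq: "initial_monos TYPE('k::field) t = {m. is_mono t m \<and> (\<exists>d\<in>set (D t). mdvd (mk d) m)}"
  using init_iff ns_iff by blast

lemma antichain: assumes "d \<in> set (D t)" "d0 \<in> set (D t)" "mdvd (mk d) (mk d0)" shows "d = d0"
  using assms(2)
proof (cases rule: D_cases)
  case (M1 i j)
  note O = M1
  from assms(1) show ?thesis
    by (cases rule: D_cases) (use O assms(3) in \<open>auto simp: mdvd_mk0 mdvd_mk1 mdvd_mk1[unfolded One_nat_def] mdvd_mk2 lk_mk ind_def split: if_splits\<close>)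
next
  case (M2 i j)
  note O = M2
  from assms(1) show ?thesis
    by (cases rule: D_cases) (use O assms(3) in \<open>auto simp: mdvd_mk0 mdvd_mk1 mdvd_mk1[unfolded One_nat_def] mdvd_mk2 lk_mk ind_def split: if_splits\<close>)
next
  case (M3 i)
  note O = M3
  from assms(1) show ?thesis
    by (cases rule: D_cases) (use O assms(3) in \<open>auto simp: mdvd_mk0 mdvd_mk1 mdvd_mk1[unfolded One_nat_def] mdvd_mk2 lk_mk ind_def split: if_splits\<close>)
qed

lemma mdvd_refl: "mdvd m m" by (simp add: mdvd_def)
lemma mdvd_trans: "mdvd a b \<Longrightarrow> mdvd b c \<Longrightarrow> mdvd a c" unfolding mdvd_def using le_trans by blast
lemma mdvd_antisym: "mdvd a b \<Longrightarrow> mdvd b a \<Longrightarrow> a = b"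
  unfolding mdvd_def by (rule poly_mapping_eqI) (simp add: le_antisym)

lemma set_gens_eq: "set (gens t) = min_gens (initial_monos TYPE('k::field) t)"
proof
  show "set (gens t) \<subseteq> min_gens (initial_monos TYPE('k) t)"
  proof
    fix g assume "g \<in> set (gens t)"
    then obtain d0 where d0: "d0 \<in> set (D t)" "g = mk d0" by (auto simp: gens_D)
    have gin: "g \<in> initial_monos TYPE('k) t" unfolding init_eq using d0 mk_mono mdvd_refl by blast
    have "m' = g" if "m' \<in> initial_monos TYPE('k) t" "mdvd m' g" for m'
    proof -
      from that(1) obtain d where d: "d \<in> set (D t)" "mdvd (mk d) m'" unfolding init_eq by blast
      then have "mdvd (mk d) (mk d0)" using that(2) d0(2) mdvd_trans by blast
      then have "d = d0" using antichain d(1) d0(1) by blast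
      then show "m' = g" using d(2) that(2) d0(2) mdvd_antisym by blast
    qed
    then show "g \<in> min_gens (initial_monos TYPE('k) t)" using gin unfolding min_gens_def by blast
  qed
next
  show "min_gens (initial_monos TYPE('k) t) \<subseteq> set (gens t)"
  proof
    fix m assume a: "m \<in> min_gens (initial_monos TYPE('k) t)"
    then have "m \<in> initial_monos TYPE('k) t" unfolding min_gens_def by blast
    then obtain d where d: "d \<in> set (D t)" "mdvd (mk d) m" unfolding init_eq by blast
    have "mk d \<in> initial_monos TYPE('k) t" unfolding init_eq using d(1) mk_mono mdvd_refl by blast
    then have "mk d = m" using a d(2) unfolding min_gens_def by blast
    then show "m \<in> set (gens t)" using d(1) by (auto simp: gens_D)
  qed
qed

lemma sorted_distinct: "sorted_wrt P xs \<Longrightarrow> (\<And>x. \<not> P x x) \<Longrightarrow> distinct xs"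
  by (induction xs) auto

lemma distinct_gens: "distinct (gens t)"
proof -
  have "distinct (D t)" using sorted_distinct[OF sorted_D prec_irrefl] .
  moreover have "inj_on mk (set (D t))"
    by (rule inj_onI) (metis antichain mdvd_refl)
  ultimately show ?thesis by (simp add: gens_D distinct_map)
qed

theorem theorem3p5:
  fixes t :: nat
  assumes "t \<ge> 2"
    and alg_closed: "\<forall>q :: 'k::field_char_0 poly. degree q > 0 \<longrightarrow> (\<exists>x. poly q x = 0)"
  shows "distinct (gens t)
    \<and> set (gens t) = min_gens (initial_monos TYPE('k) t)
    \<and> length (gens t) = t ^ 2
    \<and> linear_quotients t (gens t)
    \<and> Max {n_gens t (gens t) p | p. 2 \<le> p \<and> p \<le> t ^ 2} = 2 * t - 2"
  using distinct_gens set_gens_eq len_gens len_D linq max_part[OF assms(1)] by simp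

end
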